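(* Let $d=1$. Then $Z(N)\to1$ in probability (under $Q$) as $N\to\infty$.
   Context: $P^N_0$ is the uniform probability measure on nearest-neighbour walks $\omega:\{0,\dots,N\}\to\mathbb{Z}$ with $\omega(0)=0$, $|\omega(n)-\omega(n-1)|=1$. The environment $h=\{h(n,x):n\in\mathbb{N},x\in\mathbb{Z}\}$ is i.i.d. with $h(n,x)=\pm1$ each with probability $1/2$ on $(H,\mathcal{G},Q)$, independent of the walk. $(c_{N,1})$ is a sequence of positive numbers with $\lim_{N\to\infty}c_{N,1}^2N^{1/2}=0$. $Z(N)=\int\prod_{n=1}^N[1+c_{N,1}h(n,\omega(n))]\,dP^N_0(\omega)$. *)

theory Defs
  imports "HOL-Probability.Probability"
begin

text \<open>Nearest-neighbour walks of length N on the integers started at 0.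
  Walks are represented as functions nat => int, extended by 0 beyond time N
  so that the set of walks is finite and in bijection with the paths.\<close>
definition nn_walks :: "nat \<Rightarrow> (nat \<Rightarrow> int) set" where
  "nn_walks N = {w. w 0 = 0 \<and> (\<forall>n\<in>{1..N}. \<bar>w n - w (n - 1)\<bar> = 1) \<and> (\<forall>n>N. w n = 0)}"

text \<open>Partition function Z(N): integral w.r.t. the uniform measure P_0^N on walks.\<close>
definition partition_Z ::
  "(nat \<Rightarrow> real) \<Rightarrow> (nat \<Rightarrow> int \<Rightarrow> 'a \<Rightarrow> real) \<Rightarrow> nat \<Rightarrow> 'a \<Rightarrow> real" where
  "partition_Z c h N \<eta> =
     (\<Sum>w\<in>nn_walks N. \<Prod>n\<in>{1..N}. (1 + c N * h n (w n) \<eta>)) / real (card (nn_walks N))"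

end

theory Submission
  imports Defs
begin

lemma walks_0: "nn_walks 0 = {\<lambda>_. 0}"
  unfolding nn_walks_def by (auto simp: fun_eq_iff) (metis gr0I)

lemma walks_Suc: "nn_walks (Suc N) = (\<lambda>(w,s). w(Suc N := w N + s)) ` (nn_walks N \<times> {1,-1})"
proof
  show "nn_walks (Suc N) \<subseteq> (\<lambda>(w,s). w(Suc N := w N + s)) ` (nn_walks N \<times> {1,-1})"
  proof
    fix w' assume w': "w' \<in> nn_walks (Suc N)"
    define w where "w = w'(Suc N := 0)"
    define s where "s = w' (Suc N) - w' N"
    have "\<bar>s\<bar> = 1" using w' unfolding nn_walks_def s_def by (auto dest!: bspec[of _ _ "Suc N"])
    hence s: "s \<in> {1,-1}" by auto
    have "w \<in> nn_walks N" using w' unfolding nn_walks_def w_def by auto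
    moreover have "w' = w(Suc N := w N + s)" unfolding w_def s_def by (auto simp: fun_eq_iff)
    ultimately show "w' \<in> (\<lambda>(w,s). w(Suc N := w N + s)) ` (nn_walks N \<times> {1,-1})" using s by force
  qed
next
  show "(\<lambda>(w,s). w(Suc N := w N + s)) ` (nn_walks N \<times> {1,-1}) \<subseteq> nn_walks (Suc N)"
  proof clarify
    fix w and s :: int assume w: "w \<in> nn_walks N" and s: "s \<in> {1,-1}"
    show "w(Suc N := w N + s) \<in> nn_walks (Suc N)"
      unfolding nn_walks_def
    proof (intro CollectI conjI ballI allI impI)
      show "(w(Suc N := w N + s)) 0 = 0" using w by (simp add: nn_walks_def)
    next
      fix n assume n: "n \<in> {1..Suc N}"
      show "\<bar>(w(Suc N := w N + s)) n - (w(Suc N := w N + s)) (n - 1)\<bar> = 1"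
      proof (cases "n = Suc N")
        case True then show ?thesis using s by auto
      next
        case False then show ?thesis using n w by (auto simp: nn_walks_def)
      qed
    next
      fix n assume "n > Suc N" then show "(w(Suc N := w N + s)) n = 0" using w by (auto simp: nn_walks_def)
    qed
  qed
qed

lemma walks_inj: "inj_on (\<lambda>(w,s). w(Suc N := w N + (s::int))) (nn_walks N \<times> {1,-1})"
proof (rule inj_onI, clarify)
  fix w s v t assume w: "w \<in> nn_walks N" and v: "v \<in> nn_walks N"
    and eq: "w(Suc N := w N + s) = v(Suc N := v N + t)"
  have "w = v"
  proof
    fix n show "w n = v n"
    proof (cases "n = Suc N")
      case True then show ?thesis using w v by (auto simp: nn_walks_def)
    next
      case False then show ?thesis using fun_cong[OF eq, of n] by auto
    qed
  qed
  moreover have "w N + s = v N + t" using fun_cong[OF eq, of "Suc N"] by auto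
  ultimately show "w = v \<and> s = t" by auto
qed

lemma walks_finite: "finite (nn_walks N)"
  by (induction N) (auto simp: walks_0 walks_Suc)

lemma walks_card: "card (nn_walks N) = 2 ^ N"
proof (induction N)
  case 0 then show ?case by (simp add: walks_0)
next
  case (Suc N)
  have "card (nn_walks (Suc N)) = card (nn_walks N \<times> {1::int,-1})"
    unfolding walks_Suc by (rule card_image[OF walks_inj])
  also have "\<dots> = 2 ^ Suc N" using Suc walks_finite by (simp add: card_cartesian_product)
  finally show ?case .
qed

lemma sum_walks_Suc:
  "(\<Sum>w\<in>nn_walks (Suc N). f w) = (\<Sum>w\<in>nn_walks N. f (w(Suc N := w N + 1)) + f (w(Suc N := w N - 1)))"
proof -
  have "(\<Sum>w\<in>nn_walks (Suc N). f w) = (\<Sum>p\<in>nn_walks N \<times> {1,-1}. f ((\<lambda>(w,s). w(Suc N := w N + s)) p))"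
    unfolding walks_Suc by (subst sum.reindex[OF walks_inj]) (simp add: comp_def case_prod_beta)
  also have "\<dots> = (\<Sum>w\<in>nn_walks N. \<Sum>s\<in>{1::int,-1}. f (w(Suc N := w N + s)))"
    by (subst sum.cartesian_product) (simp add: split_def)
  also have "\<dots> = (\<Sum>w\<in>nn_walks N. f (w(Suc N := w N + 1)) + f (w(Suc N := w N - 1)))"
    by simp
  finally show ?thesis .
qed

definition fw :: "nat \<Rightarrow> real \<Rightarrow> real" where "fw m x = sqrt (x\<^sup>2 + real m + 1)"
definition gw :: "nat \<Rightarrow> real \<Rightarrow> real" where "gw m x = fw m x - \<bar>x\<bar>"
definition Uw :: "real \<Rightarrow> nat \<Rightarrow> real \<Rightarrow> real" where "Uw \<beta> m x = 1 + \<beta> * gw m x"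
definition Pop :: "(real \<Rightarrow> real) \<Rightarrow> real \<Rightarrow> real" where "Pop F x = F x / 2 + F (x+1) / 4 + F (x-1) / 4"
definition Ww :: "real \<Rightarrow> nat \<Rightarrow> real \<Rightarrow> real" where "Ww \<beta> m x = Pop (Uw \<beta> m) x"
definition phiw :: "real \<Rightarrow> real \<Rightarrow> real" where "phiw t x = (if x = 0 then 1 + t else 1)"

lemma sqrt_concave: "sqrt a + sqrt b \<le> 2 * sqrt ((a + b) / 2)" if "a \<ge> 0" "b \<ge> 0" for a b :: real
proof -
  define u where "u = sqrt a"
  define v where "v = sqrt b"
  have u: "u \<ge> 0" "u * u = a" using that by (auto simp: u_def)
  have v: "v \<ge> 0" "v * v = b" using that by (auto simp: v_def)
  have "(u + v) * (u + v) \<le> 2 * (a + b)"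
  proof -
    have "0 \<le> (u - v) * (u - v)" by simp
    then show ?thesis unfolding u(2)[symmetric] v(2)[symmetric] by (simp add: algebra_simps)
  qed
  then have "sqrt ((u + v) * (u + v)) \<le> sqrt (2 * (a + b))" by (rule real_sqrt_le_mono)
  also have "sqrt ((u + v) * (u + v)) = u + v" using u v by simp
  also have "2 * (a + b) = 4 * ((a + b) / 2)" by simp
  also have "sqrt (4 * ((a + b) / 2)) = 2 * sqrt ((a + b) / 2)" by (simp only: real_sqrt_mult real_sqrt_four)
  finally show ?thesis by (simp add: u_def v_def)
qed

lemma gw_nonneg: "gw m x \<ge> 0"
proof -
  have "sqrt (x\<^sup>2) \<le> sqrt (x\<^sup>2 + real m + 1)" by (intro real_sqrt_le_mono) auto
  then show ?thesis by (simp add: gw_def fw_def)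
qed

lemma Pop_fw: "Pop (fw m) x \<le> fw (Suc m) x"
proof -
  have "fw m (x+1) + fw m (x-1) \<le> 2 * sqrt (((x+1)\<^sup>2 + real m + 1 + ((x-1)\<^sup>2 + real m + 1)) / 2)"
    unfolding fw_def by (intro sqrt_concave) auto
  also have "((x+1)\<^sup>2 + real m + 1 + ((x-1)\<^sup>2 + real m + 1)) / 2 = x\<^sup>2 + real (Suc m) + 1"
    by (simp add: power2_eq_square algebra_simps)
  finally have 1: "fw m (x+1) + fw m (x-1) \<le> 2 * fw (Suc m) x" by (simp add: fw_def)
  have 2: "fw m x \<le> fw (Suc m) x" unfolding fw_def by (intro real_sqrt_le_mono) auto
  show ?thesis using 1 2 unfolding Pop_def by linarith
qed

lemma avg_le: "2 * a \<le> b + c \<Longrightarrow> (a::real) \<le> a / 2 + b / 4 + c / 4"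
  by (simp add: field_simps)

lemma Pop_abs: "Pop abs x \<ge> \<bar>x\<bar>" "Pop abs 0 = 1/2"
proof -
  have "\<bar>(x+1) + (x-1)\<bar> \<le> \<bar>x+1\<bar> + \<bar>x-1\<bar>" by (rule abs_triangle_ineq)
  then have "2 * \<bar>x\<bar> \<le> \<bar>x+1\<bar> + \<bar>x-1\<bar>" by simp
  then show "Pop abs x \<ge> \<bar>x\<bar>" unfolding Pop_def by (rule avg_le)
  show "Pop abs 0 = 1/2" unfolding Pop_def by simp
qed

lemma Pop_lin: "Pop (\<lambda>y. a + b * (F y - G y)) x = a + b * (Pop F x - Pop G x)"
  unfolding Pop_def by (simp add: field_simps)

lemma Pop_mono: "(\<And>y. F y \<le> G y) \<Longrightarrow> Pop F x \<le> Pop G x"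
  unfolding Pop_def by (intro add_mono divide_right_mono) auto

lemma key:
  assumes t: "t \<ge> 0" and b: "\<beta> \<ge> 0" and R: "sqrt (real m + 2) \<le> R" and cond: "t * (1 + \<beta> * R) \<le> \<beta> / 2"
  shows "phiw t x * Pop (Uw \<beta> m) x \<le> Uw \<beta> (Suc m) x"
proof -
  have PU: "\<And>y. Pop (Uw \<beta> m) y = 1 + \<beta> * (Pop (fw m) y - Pop abs y)"
    unfolding Uw_def gw_def by (rule Pop_lin)
  have le: "Pop (Uw \<beta> m) x \<le> Uw \<beta> (Suc m) x"
    unfolding PU Uw_def gw_def using Pop_fw[of m x] Pop_abs(1)[of x] b
    by (intro add_left_mono mult_left_mono) auto
  show ?thesis
  proof (cases "x = 0")
    case False then show ?thesis using le by (simp add: phiw_def)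
  next
    case True
    have f1: "fw (Suc m) 0 = sqrt (real m + 2)" by (simp add: fw_def add.assoc)
    have P0: "Pop (Uw \<beta> m) 0 \<le> 1 + \<beta> * (sqrt (real m + 2) - 1/2)"
      unfolding PU Pop_abs(2) using Pop_fw[of m 0] b f1 by (intro add_left_mono mult_left_mono) auto
    have s: "sqrt (real m + 2) \<ge> 1/2"
    proof -
      have "sqrt (real m + 2) \<ge> sqrt 1" by (intro real_sqrt_le_mono) auto
      then have "sqrt (real m + 2) \<ge> 1" by simp
      then show ?thesis by linarith
    qed
    have "phiw t x * Pop (Uw \<beta> m) x \<le> (1 + t) * (1 + \<beta> * (sqrt (real m + 2) - 1/2))"
      using True P0 t by (simp add: phiw_def mult_left_mono)
    also have "\<dots> = 1 + \<beta> * sqrt (real m + 2) - \<beta>/2 + t * (1 + \<beta> * (sqrt (real m + 2) - 1/2))"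
      by (simp add: algebra_simps)
    also have "t * (1 + \<beta> * (sqrt (real m + 2) - 1/2)) \<le> t * (1 + \<beta> * R)"
      using t b R by (intro mult_left_mono add_left_mono) auto
    also have "1 + \<beta> * sqrt (real m + 2) - \<beta>/2 + t * (1 + \<beta> * R) \<le> Uw \<beta> (Suc m) x"
      using cond True by (simp add: Uw_def gw_def f1)
    finally show ?thesis by simp
  qed
qed

lemma Ww_step:
  assumes t: "t \<ge> 0" and b: "\<beta> \<ge> 0" and R: "sqrt (real m + 2) \<le> R" and cond: "t * (1 + \<beta> * R) \<le> \<beta> / 2"
  shows "Pop (\<lambda>y. phiw t y * Ww \<beta> m y) x \<le> Ww \<beta> (Suc m) x"
  unfolding Ww_def[of _ "Suc m"] Ww_def[of _ m]
  by (intro Pop_mono key[OF assms])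

lemma avg_ge1: "0 \<le> (p::real) \<Longrightarrow> 0 \<le> q \<Longrightarrow> 0 \<le> r \<Longrightarrow> 1 \<le> (1 + p) / 2 + (1 + q) / 4 + (1 + r) / 4"
  by (simp add: field_simps)

lemma Ww_ge1: "\<beta> \<ge> 0 \<Longrightarrow> Ww \<beta> m x \<ge> 1"
proof -
  assume b: "\<beta> \<ge> 0"
  have a: "\<beta> * gw m x \<ge> 0" "\<beta> * gw m (x+1) \<ge> 0" "\<beta> * gw m (x-1) \<ge> 0" using b gw_nonneg by simp_all
  then show ?thesis unfolding Ww_def Pop_def Uw_def by (rule avg_ge1)
qed

lemma Ww_0: "\<beta> \<ge> 0 \<Longrightarrow> Ww \<beta> K 0 \<le> 1 + \<beta> * sqrt (real K + 2)"
proof -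
  assume b: "\<beta> \<ge> 0"
  have "Ww \<beta> K 0 = 1 + \<beta> * (Pop (fw K) 0 - Pop abs 0)"
    unfolding Ww_def Uw_def gw_def by (rule Pop_lin)
  also have "\<dots> \<le> 1 + \<beta> * fw (Suc K) 0"
    using Pop_fw[of K 0] b by (intro add_left_mono mult_left_mono) (auto simp: Pop_def)
  also have "fw (Suc K) 0 = sqrt (real K + 2)" by (simp add: fw_def add.assoc)
  finally show ?thesis .
qed

definition Pw :: "real \<Rightarrow> nat \<Rightarrow> (nat \<Rightarrow> int) \<Rightarrow> (nat \<Rightarrow> int) \<Rightarrow> real" where
  "Pw t N w v = (\<Prod>n\<in>{1..N}. phiw t (of_int (w n - v n) / 2))"

definition Sw :: "real \<Rightarrow> real \<Rightarrow> nat \<Rightarrow> nat \<Rightarrow> real" where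
  "Sw t \<beta> K N = (\<Sum>w\<in>nn_walks N. \<Sum>v\<in>nn_walks N. Pw t N w v * Ww \<beta> (K - N) (of_int (w N - v N) / 2))"

lemma phiw_nonneg: "t \<ge> 0 \<Longrightarrow> phiw t x \<ge> 0"
  by (simp add: phiw_def)

lemma Pw_nonneg: "t \<ge> 0 \<Longrightarrow> Pw t N w v \<ge> 0"
  unfolding Pw_def by (intro prod_nonneg phiw_nonneg) auto

lemma Pw_Suc: "Pw t (Suc N) (w(Suc N := a)) (v(Suc N := b)) = Pw t N w v * phiw t (of_int (a - b) / 2)"
proof -
  have "{1..Suc N} = insert (Suc N) {1..N}" by auto
  then have "Pw t (Suc N) (w(Suc N := a)) (v(Suc N := b)) =
     phiw t (of_int (a - b) / 2) * (\<Prod>n\<in>{1..N}. phiw t (of_int ((w(Suc N := a)) n - (v(Suc N := b)) n) / 2))"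
    unfolding Pw_def by simp
  also have "(\<Prod>n\<in>{1..N}. phiw t (of_int ((w(Suc N := a)) n - (v(Suc N := b)) n) / 2)) = Pw t N w v"
    unfolding Pw_def by (intro prod.cong) auto
  finally show ?thesis by (simp only: mult.commute)
qed

lemma Sw_step:
  assumes t: "t \<ge> 0" and b: "\<beta> \<ge> 0" and cond: "t * (1 + \<beta> * sqrt (real K + 2)) \<le> \<beta> / 2" and NK: "N < K"
  shows "Sw t \<beta> K (Suc N) \<le> 4 * Sw t \<beta> K N"
proof -
  define m where "m = K - Suc N"
  have m1: "K - N = Suc m" using NK by (simp add: m_def)
  have R: "sqrt (real m + 2) \<le> sqrt (real K + 2)" using NK by (simp add: m_def)
  define G where "G w' v' = Pw t (Suc N) w' v' * Ww \<beta> m (of_int (w' (Suc N) - v' (Suc N)) / 2)" for w' v'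
  have "Sw t \<beta> K (Suc N) = (\<Sum>w'\<in>nn_walks (Suc N). \<Sum>v'\<in>nn_walks (Suc N). G w' v')"
    unfolding Sw_def G_def m_def by simp
  also have "\<dots> = (\<Sum>w\<in>nn_walks N. \<Sum>v\<in>nn_walks N.
       G (w(Suc N := w N + 1)) (v(Suc N := v N + 1)) + G (w(Suc N := w N + 1)) (v(Suc N := v N - 1)) +
      (G (w(Suc N := w N - 1)) (v(Suc N := v N + 1)) + G (w(Suc N := w N - 1)) (v(Suc N := v N - 1))))"
    by (simp add: sum_walks_Suc sum.distrib)
  also have "\<dots> \<le> (\<Sum>w\<in>nn_walks N. \<Sum>v\<in>nn_walks N. 4 * (Pw t N w v * Ww \<beta> (K - N) (of_int (w N - v N) / 2)))"
  proof (intro sum_mono)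
    fix w v
    define x where "x = (of_int (w N - v N) / 2 :: real)"
    have e1: "of_int (w N + 1 - (v N + 1)) / 2 = x" "of_int (w N - 1 - (v N - 1)) / 2 = x"
      "of_int (w N + 1 - (v N - 1)) / 2 = x + 1" "of_int (w N - 1 - (v N + 1)) / 2 = x - 1"
      unfolding x_def by (simp_all add: field_simps)
    have "G (w(Suc N := w N + 1)) (v(Suc N := v N + 1)) + G (w(Suc N := w N + 1)) (v(Suc N := v N - 1)) +
      (G (w(Suc N := w N - 1)) (v(Suc N := v N + 1)) + G (w(Suc N := w N - 1)) (v(Suc N := v N - 1)))
      = Pw t N w v * (4 * Pop (\<lambda>y. phiw t y * Ww \<beta> m y) x)"
      unfolding G_def Pw_Suc fun_upd_same e1 by (simp add: Pop_def algebra_simps)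
    also have "\<dots> \<le> Pw t N w v * (4 * Ww \<beta> (Suc m) x)"
      using Ww_step[OF t b R cond] Pw_nonneg[OF t] by (intro mult_left_mono) auto
    finally show "G (w(Suc N := w N + 1)) (v(Suc N := v N + 1)) + G (w(Suc N := w N + 1)) (v(Suc N := v N - 1)) +
      (G (w(Suc N := w N - 1)) (v(Suc N := v N + 1)) + G (w(Suc N := w N - 1)) (v(Suc N := v N - 1)))
      \<le> 4 * (Pw t N w v * Ww \<beta> (K - N) (of_int (w N - v N) / 2))"
      by (simp add: m1 x_def)
  qed
  also have "\<dots> = 4 * Sw t \<beta> K N"
    unfolding Sw_def by (simp add: sum_distrib_left)
  finally show ?thesis .
qed

lemma Sw_bound:
  assumes t: "t \<ge> 0" and b: "\<beta> \<ge> 0" and cond: "t * (1 + \<beta> * sqrt (real K + 2)) \<le> \<beta> / 2"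
  shows "N \<le> K \<Longrightarrow> Sw t \<beta> K N \<le> 4 ^ N * Ww \<beta> K 0"
proof (induction N)
  case 0 then show ?case by (simp add: Sw_def walks_0 Pw_def)
next
  case (Suc N)
  then have "Sw t \<beta> K (Suc N) \<le> 4 * Sw t \<beta> K N" by (intro Sw_step[OF t b cond]) auto
  also have "\<dots> \<le> 4 * (4 ^ N * Ww \<beta> K 0)" using Suc by auto
  finally show ?case by simp
qed

lemma pair_bound:
  assumes t: "t \<ge> 0" and b: "\<beta> \<ge> 0" and cond: "t * (1 + \<beta> * sqrt (real K + 2)) \<le> \<beta> / 2"
  shows "(\<Sum>w\<in>nn_walks K. \<Sum>v\<in>nn_walks K. Pw t K w v) \<le> 4 ^ K * (1 + \<beta> * sqrt (real K + 2))"
proof -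
  have "(\<Sum>w\<in>nn_walks K. \<Sum>v\<in>nn_walks K. Pw t K w v) \<le> Sw t \<beta> K K"
    unfolding Sw_def
  proof (intro sum_mono)
    fix w v
    have "Pw t K w v * 1 \<le> Pw t K w v * Ww \<beta> (K - K) (of_int (w K - v K) / 2)"
      using Ww_ge1[OF b] Pw_nonneg[OF t] by (intro mult_left_mono) auto
    then show "Pw t K w v \<le> Pw t K w v * Ww \<beta> (K - K) (of_int (w K - v K) / 2)" by simp
  qed
  also have "\<dots> \<le> 4 ^ K * Ww \<beta> K 0" by (rule Sw_bound[OF t b cond]) simp
  also have "\<dots> \<le> 4 ^ K * (1 + \<beta> * sqrt (real K + 2))" using Ww_0[OF b] by simp
  finally show ?thesis .
qed

locale rwalk = prob_space Q for Q :: "'a measure" +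
  fixes g :: "nat \<Rightarrow> int \<Rightarrow> 'a \<Rightarrow> real"
  assumes ind: "indep_vars (\<lambda>_. borel) (\<lambda>(n,x). g n x) UNIV"
    and pm: "\<And>n x \<eta>. g n x \<eta> = 1 \<or> g n x \<eta> = -1"
    and E0: "\<And>n x. expectation (g n x) = 0"
begin

lemma meas[measurable]: "g n x \<in> borel_measurable Q"
  using ind unfolding indep_vars_def by auto

lemma gsq: "g n x \<eta> * g n x \<eta> = 1"
  using pm[of n x \<eta>] by auto

lemma gabs: "\<bar>g n x \<eta>\<bar> = 1"
  using pm[of n x \<eta>] by auto

lemma int_g[intro]: "integrable Q (g n x)"
  by (rule integrable_const_bound[where B=1]) (auto simp: gabs)

lemma int_gg: "integrable Q (\<lambda>\<eta>. g n a \<eta> * g m b \<eta>)"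
  by (rule integrable_const_bound[where B=1]) (auto simp: gabs abs_mult)

lemma E_gg: assumes "a \<noteq> b" shows "expectation (\<lambda>\<eta>. g n a \<eta> * g n b \<eta>) = 0"
proof -
  let ?X = "\<lambda>(n,x). g n x"
  have I: "indep_vars (\<lambda>_. borel) ?X {(n,a),(n,b)}"
    by (rule indep_vars_subset[OF ind]) auto
  have "expectation (\<lambda>\<eta>. \<Prod>i\<in>{(n,a),(n,b)}. ?X i \<eta>) = (\<Prod>i\<in>{(n,a),(n,b)}. expectation (?X i))"
    by (rule indep_vars_lebesgue_integral[OF _ I]) (auto)
  then show ?thesis using assms by (simp add: E0)
qed

lemma bound_Y: "\<bar>(1 + c1 * g n a \<eta>) * (1 + c2 * g n b \<eta>)\<bar> \<le> (1 + \<bar>c1\<bar>) * (1 + \<bar>c2\<bar>)"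
proof -
  have "\<bar>1 + c1 * g n a \<eta>\<bar> \<le> 1 + \<bar>c1\<bar>" using abs_triangle_ineq[of 1 "c1 * g n a \<eta>"] by (simp add: abs_mult gabs)
  moreover have "\<bar>1 + c2 * g n b \<eta>\<bar> \<le> 1 + \<bar>c2\<bar>" using abs_triangle_ineq[of 1 "c2 * g n b \<eta>"] by (simp add: abs_mult gabs)
  ultimately show ?thesis by (simp add: abs_mult mult_mono)
qed

lemma int_Y: "integrable Q (\<lambda>\<eta>. (1 + c1 * g n a \<eta>) * (1 + c2 * g n b \<eta>))"
  by (rule integrable_const_bound[where B="(1 + \<bar>c1\<bar>) * (1 + \<bar>c2\<bar>)"]) (auto simp: bound_Y)

lemma lin4: "integrable Q f1 \<Longrightarrow> integrable Q f2 \<Longrightarrow> integrable Q f3 \<Longrightarrow> integrable Q f4 \<Longrightarrow>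
  expectation (\<lambda>\<eta>. f1 \<eta> + f2 \<eta> + f3 \<eta> + f4 \<eta>) = expectation f1 + expectation f2 + expectation f3 + expectation f4"
  by (simp add: Bochner_Integration.integral_add integrable_add)

lemma EY: "expectation (\<lambda>\<eta>. (1 + c1 * g n a \<eta>) * (1 + c2 * g n b \<eta>)) = (if a = b then 1 + c1 * c2 else 1)"
proof (cases "a = b")
  case True
  have "(\<lambda>\<eta>. (1 + c1 * g n a \<eta>) * (1 + c2 * g n b \<eta>)) = (\<lambda>\<eta>. (1 + c1 * c2) + (c1 + c2) * g n a \<eta>)"
  proof
    fix \<eta>
    have e: "\<And>y::real. (1 + c1 * y) * (1 + c2 * y) = 1 + c1 * c2 * (y * y) + (c1 + c2) * y"
      by (simp add: algebra_simps)
    show "(1 + c1 * g n a \<eta>) * (1 + c2 * g n b \<eta>) = (1 + c1 * c2) + (c1 + c2) * g n a \<eta>"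
      unfolding True e gsq by simp
  qed
  moreover have "expectation (\<lambda>\<eta>. (1 + c1 * c2) + (c1 + c2) * g n a \<eta>) = 1 + c1 * c2"
    by (subst Bochner_Integration.integral_add) (auto simp: E0 prob_space)
  ultimately show ?thesis using True by simp
next
  case False
  have "(\<lambda>\<eta>. (1 + c1 * g n a \<eta>) * (1 + c2 * g n b \<eta>)) =
    (\<lambda>\<eta>. 1 + c1 * g n a \<eta> + c2 * g n b \<eta> + c1 * c2 * (g n a \<eta> * g n b \<eta>))"
    by (auto simp: fun_eq_iff algebra_simps)
  then have "expectation (\<lambda>\<eta>. (1 + c1 * g n a \<eta>) * (1 + c2 * g n b \<eta>)) =
     expectation (\<lambda>_. 1) + expectation (\<lambda>\<eta>. c1 * g n a \<eta>) + expectation (\<lambda>\<eta>. c2 * g n b \<eta>)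
      + expectation (\<lambda>\<eta>. c1 * c2 * (g n a \<eta> * g n b \<eta>))"
    by (simp only: lin4 integrable_const int_g int_gg integrable_mult_right)
  also have "\<dots> = 1" using False by (simp add: E_gg E0 prob_space)
  finally show ?thesis using False by simp
qed

lemma indep_Y: "indep_vars (\<lambda>_. borel) (\<lambda>n \<eta>. (1 + c1 * g n (a n) \<eta>) * (1 + c2 * g n (b n) \<eta>)) L"
proof -
  let ?X = "\<lambda>(n,x). g n x"
  define K where "K n = {(n, a n), (n, b n)}" for n
  have R: "indep_vars (\<lambda>j. PiM (K j) (\<lambda>_. borel)) (\<lambda>j \<omega>. restrict (\<lambda>i. ?X i \<omega>) (K j)) L"
    by (rule indep_vars_restrict[OF ind]) (auto simp: K_def disjoint_family_on_def)
  define F where "F j f = (1 + c1 * f (j, a j)) * (1 + c2 * f (j, b j))" for j and f :: "nat \<times> int \<Rightarrow> real"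
  have "indep_vars (\<lambda>_. borel) (\<lambda>j \<omega>. F j (restrict (\<lambda>i. ?X i \<omega>) (K j))) L"
  proof (rule indep_vars_compose2[OF R])
    fix j
    have 1: "(\<lambda>f. f (j, a j)) \<in> borel_measurable (PiM (K j) (\<lambda>_. borel))"
      by (rule measurable_component_singleton) (simp add: K_def)
    have 2: "(\<lambda>f. f (j, b j)) \<in> borel_measurable (PiM (K j) (\<lambda>_. borel))"
      by (rule measurable_component_singleton) (simp add: K_def)
    show "F j \<in> borel_measurable (PiM (K j) (\<lambda>_. borel))"
      unfolding F_def using 1 2 by measurable
  qed
  also have "(\<lambda>j \<omega>. F j (restrict (\<lambda>i. ?X i \<omega>) (K j))) = (\<lambda>n \<eta>. (1 + c1 * g n (a n) \<eta>) * (1 + c2 * g n (b n) \<eta>))"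
    by (simp add: fun_eq_iff F_def K_def)
  finally show ?thesis .
qed

lemma EPi:
  assumes "finite L"
  shows "expectation (\<lambda>\<eta>. \<Prod>n\<in>L. (1 + c1 * g n (a n) \<eta>) * (1 + c2 * g n (b n) \<eta>))
       = (\<Prod>n\<in>L. if a n = b n then 1 + c1 * c2 else 1)"
    and "integrable Q (\<lambda>\<eta>. \<Prod>n\<in>L. (1 + c1 * g n (a n) \<eta>) * (1 + c2 * g n (b n) \<eta>))"
proof -
  show "expectation (\<lambda>\<eta>. \<Prod>n\<in>L. (1 + c1 * g n (a n) \<eta>) * (1 + c2 * g n (b n) \<eta>))
       = (\<Prod>n\<in>L. if a n = b n then 1 + c1 * c2 else 1)"
    using indep_vars_lebesgue_integral[OF assms indep_Y, of c1 a c2 b] int_Y by (simp add: EY)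
  show "integrable Q (\<lambda>\<eta>. \<Prod>n\<in>L. (1 + c1 * g n (a n) \<eta>) * (1 + c2 * g n (b n) \<eta>))"
    using indep_vars_integrable[OF assms indep_Y, of c1 a c2 b] int_Y by simp
qed

end

context rwalk begin

lemma second_moment:
  fixes c :: "nat \<Rightarrow> real"
  shows "integrable Q (\<lambda>\<eta>. (partition_Z c g N \<eta> - 1)\<^sup>2)"
    and "expectation (\<lambda>\<eta>. (partition_Z c g N \<eta> - 1)\<^sup>2) =
         (\<Sum>w\<in>nn_walks N. \<Sum>v\<in>nn_walks N. Pw ((c N)\<^sup>2) N w v) / 4 ^ N - 1"
proof -
  define W where "W = nn_walks N"
  define A :: real where "A = real (card W)"
  define cc where "cc = c N"
  have finW: "finite W" unfolding W_def by (rule walks_finite)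
  have A: "A = 2 ^ N" unfolding A_def W_def by (simp add: walks_card)
  have Apos: "A > 0" using A by simp
  have A2: "A\<^sup>2 = 4 ^ N"
  proof -
    have "A\<^sup>2 = (2 * 2) ^ N" unfolding A power2_eq_square power_mult_distrib ..
    then show ?thesis by simp
  qed
  define R where "R w \<eta> = (\<Prod>n\<in>{1..N}. (1 + cc * g n (w n) \<eta>))" for w \<eta>
  define F where "F w v \<eta> = (R w \<eta> - 1) * (R v \<eta> - 1)" for w v \<eta>
  have Z: "partition_Z c g N \<eta> = (\<Sum>w\<in>W. R w \<eta>) / A" for \<eta>
    unfolding partition_Z_def R_def W_def A_def cc_def ..
  have sq: "(partition_Z c g N \<eta> - 1)\<^sup>2 = (\<Sum>w\<in>W. \<Sum>v\<in>W. F w v \<eta>) / A\<^sup>2" for \<eta>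
  proof -
    have "partition_Z c g N \<eta> - 1 = (\<Sum>w\<in>W. (R w \<eta> - 1)) / A"
      unfolding Z using Apos by (simp add: sum_subtractf A_def field_simps)
    then have "(partition_Z c g N \<eta> - 1)\<^sup>2 = ((\<Sum>w\<in>W. (R w \<eta> - 1)) * (\<Sum>v\<in>W. (R v \<eta> - 1))) / A\<^sup>2"
      by (simp add: power2_eq_square)
    also have "(\<Sum>w\<in>W. (R w \<eta> - 1)) * (\<Sum>v\<in>W. (R v \<eta> - 1)) = (\<Sum>w\<in>W. \<Sum>v\<in>W. F w v \<eta>)"
      unfolding F_def by (rule sum_product)
    finally show ?thesis .
  qed
  have RR: "R w \<eta> * R v \<eta> = (\<Prod>n\<in>{1..N}. (1 + cc * g n (w n) \<eta>) * (1 + cc * g n (v n) \<eta>))" for w v \<eta>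
    unfolding R_def by (rule prod.distrib[symmetric])
  have R1: "R w \<eta> = (\<Prod>n\<in>{1..N}. (1 + cc * g n (w n) \<eta>) * (1 + 0 * g n (w n) \<eta>))" for w \<eta>
    unfolding R_def by simp
  have iRR: "integrable Q (\<lambda>\<eta>. R w \<eta> * R v \<eta>)" for w v
    unfolding RR by (rule EPi(2)) simp
  have iR: "integrable Q (R w)" for w
    by (subst R1[abs_def]) (rule EPi(2), simp)
  have ERR: "expectation (\<lambda>\<eta>. R w \<eta> * R v \<eta>) = Pw ((c N)\<^sup>2) N w v" for w v
    unfolding RR EPi(1)[OF finite_atLeastAtMost] Pw_def cc_def
    by (intro prod.cong) (auto simp: phiw_def power2_eq_square)
  have ER: "expectation (R w) = 1" for w
  proof -
    have e: "expectation (\<lambda>\<eta>. \<Prod>n\<in>{1..N}. (1 + cc * g n (w n) \<eta>) * (1 + 0 * g n (w n) \<eta>))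
       = (\<Prod>n\<in>{1..N}. if w n = w n then 1 + cc * 0 else 1)" by (rule EPi(1)) simp
    have "R w = (\<lambda>\<eta>. \<Prod>n\<in>{1..N}. (1 + cc * g n (w n) \<eta>) * (1 + 0 * g n (w n) \<eta>))"
      using R1 by (simp add: fun_eq_iff)
    then show ?thesis using e by simp
  qed
  have Fexp: "F w v \<eta> = R w \<eta> * R v \<eta> + (- R w \<eta>) + (- R v \<eta>) + 1" for w v \<eta>
    unfolding F_def by (simp add: algebra_simps)
  have iF: "integrable Q (F w v)" for w v
    unfolding Fexp[abs_def] using iRR iR by (intro Bochner_Integration.integrable_add Bochner_Integration.integrable_minus integrable_const) auto
  have EF: "expectation (F w v) = Pw ((c N)\<^sup>2) N w v - 1" for w v
  proof -
    have "expectation (F w v) = expectation (\<lambda>\<eta>. R w \<eta> * R v \<eta>) + expectation (\<lambda>\<eta>. - R w \<eta>)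
        + expectation (\<lambda>\<eta>. - R v \<eta>) + expectation (\<lambda>_. 1)"
      unfolding Fexp[abs_def] using iRR iR by (intro lin4 integrable_minus) auto
    then show ?thesis by (simp add: ERR ER prob_space)
  qed
  have isum: "integrable Q (\<lambda>\<eta>. \<Sum>w\<in>W. \<Sum>v\<in>W. F w v \<eta>)"
    using iF by (intro Bochner_Integration.integrable_sum) auto
  show "integrable Q (\<lambda>\<eta>. (partition_Z c g N \<eta> - 1)\<^sup>2)"
    unfolding sq using isum by (rule Bochner_Integration.integrable_divide)
  have "expectation (\<lambda>\<eta>. (partition_Z c g N \<eta> - 1)\<^sup>2) = expectation (\<lambda>\<eta>. \<Sum>w\<in>W. \<Sum>v\<in>W. F w v \<eta>) / A\<^sup>2"
    unfolding sq by simp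
  also have "expectation (\<lambda>\<eta>. \<Sum>w\<in>W. \<Sum>v\<in>W. F w v \<eta>) = (\<Sum>w\<in>W. \<Sum>v\<in>W. expectation (F w v))"
    using iF by (simp add: Bochner_Integration.integral_sum Bochner_Integration.integrable_sum)
  also have "\<dots> = (\<Sum>w\<in>W. \<Sum>v\<in>W. Pw ((c N)\<^sup>2) N w v) - A\<^sup>2"
    by (simp add: EF sum_subtractf A_def power2_eq_square)
  finally show "expectation (\<lambda>\<eta>. (partition_Z c g N \<eta> - 1)\<^sup>2) =
         (\<Sum>w\<in>nn_walks N. \<Sum>v\<in>nn_walks N. Pw ((c N)\<^sup>2) N w v) / 4 ^ N - 1"
    using Apos unfolding W_def[symmetric] A2[symmetric] by (simp add: field_simps)
qed

end

lemma sets_gt: "f \<in> borel_measurable M \<Longrightarrow> {\<eta> \<in> space M. \<bar>f \<eta> - 1\<bar> > (e::real)} \<in> sets M"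
  by measurable

lemma sets_ge: "f \<in> borel_measurable M \<Longrightarrow> {\<eta> \<in> space M. \<bar>f \<eta> - 1\<bar> \<ge> (e::real)} \<in> sets M"
  by measurable

theorem lemma14:
  fixes Q :: "'a measure" and h :: "nat \<Rightarrow> int \<Rightarrow> 'a \<Rightarrow> real" and c :: "nat \<Rightarrow> real"
  assumes "prob_space Q"
    and "prob_space.indep_vars Q (\<lambda>_. borel) (\<lambda>(n, x). h n x) UNIV"
    and "\<And>n x. prob_space.prob Q {\<eta> \<in> space Q. h n x \<eta> = 1} = 1/2"
    and "\<And>n x. prob_space.prob Q {\<eta> \<in> space Q. h n x \<eta> = -1} = 1/2"
    and "\<And>N. c N > 0"
    and "(\<lambda>N. (c N)\<^sup>2 * sqrt (real N)) \<longlonglongrightarrow> 0"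
  shows "\<forall>\<epsilon>>0. (\<lambda>N. prob_space.prob Q {\<eta> \<in> space Q. \<bar>partition_Z c h N \<eta> - 1\<bar> > \<epsilon>})
            \<longlonglongrightarrow> 0"
proof -
  interpret Q: prob_space Q by (rule assms(1))
  have hm[measurable]: "h n x \<in> borel_measurable Q" for n x
    using assms(2) unfolding Q.indep_vars_def by auto
  define h' where "h' n x \<eta> = (if h n x \<eta> = 1 then 1 else -1 :: real)" for n x \<eta>
  have h'm[measurable]: "h' n x \<in> borel_measurable Q" for n x
    unfolding h'_def by measurable
  have ind': "Q.indep_vars (\<lambda>_. borel) (\<lambda>(n,x). h' n x) UNIV"
  proof -
    have "Q.indep_vars (\<lambda>_. borel) (\<lambda>i \<eta>. (\<lambda>r::real. if r = 1 then 1 else -1::real) ((\<lambda>(n,x). h n x) i \<eta>)) UNIV"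
      by (rule Q.indep_vars_compose2[OF assms(2)]) measurable
    also have "(\<lambda>i \<eta>. (\<lambda>r::real. if r = 1 then 1 else -1::real) ((\<lambda>(n,x). h n x) i \<eta>)) = (\<lambda>(n,x). h' n x)"
      by (auto simp: fun_eq_iff h'_def split: prod.split)
    finally show ?thesis .
  qed
  have pm: "h' n x \<eta> = 1 \<or> h' n x \<eta> = -1" for n x \<eta> by (simp add: h'_def)
  have E0: "Q.expectation (h' n x) = 0" for n x
  proof -
    define S where "S = {\<eta> \<in> space Q. h n x \<eta> = 1}"
    have S[measurable]: "S \<in> sets Q" unfolding S_def by measurable
    have "Q.expectation (h' n x) = Q.expectation (\<lambda>\<eta>. 2 * indicator S \<eta> - 1)"
      by (intro Bochner_Integration.integral_cong) (auto simp: h'_def S_def indicator_def)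
    also have "\<dots> = 2 * Q.prob S - 1"
      using S by (subst Bochner_Integration.integral_diff) (auto simp: Q.prob_space Q.emeasure_eq_measure)
    also have "Q.prob S = 1/2" unfolding S_def by (rule assms(3))
    finally show ?thesis by simp
  qed
  interpret rw: rwalk Q h'
    by (intro rwalk.intro rwalk_axioms.intro assms(1) ind' pm E0)
  have ae: "AE \<eta> in Q. \<forall>n x. h n x \<eta> = h' n x \<eta>"
    unfolding AE_all_countable
  proof (intro allI)
    fix n x
    define S1 where "S1 = {\<eta> \<in> space Q. h n x \<eta> = 1}"
    define S2 where "S2 = {\<eta> \<in> space Q. h n x \<eta> = -1}"
    have [measurable]: "S1 \<in> sets Q" "S2 \<in> sets Q" unfolding S1_def S2_def by measurable
    have "Q.prob (S1 \<union> S2) = Q.prob S1 + Q.prob S2"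
      by (rule Q.finite_measure_Union) (auto simp: S1_def S2_def)
    also have "\<dots> = 1" unfolding S1_def S2_def assms(3) assms(4) by simp
    finally have "AE \<eta> in Q. \<eta> \<in> S1 \<union> S2" by (rule Q.AE_prob_1)
    then show "AE \<eta> in Q. h n x \<eta> = h' n x \<eta>"
      by eventually_elim (auto simp: h'_def S1_def S2_def)
  qed
  have aeZ: "AE \<eta> in Q. partition_Z c h N \<eta> = partition_Z c h' N \<eta>" for N
    using ae by eventually_elim (simp add: partition_Z_def)
  have Zm[measurable]: "partition_Z c h N \<in> borel_measurable Q" "partition_Z c h' N \<in> borel_measurable Q" for N
    unfolding partition_Z_def
    by (intro borel_measurable_divide borel_measurable_sum borel_measurable_prod borel_measurable_times
        borel_measurable_add borel_measurable_const hm h'm)+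
  define u where "u N = (c N)\<^sup>2 * sqrt (real N + 2)" for N
  have u0: "u \<longlonglongrightarrow> 0"
  proof (rule tendsto_sandwich[of "\<lambda>_. 0" _ _ "\<lambda>N. sqrt 3 * ((c N)\<^sup>2 * sqrt (real N))"])
    show "eventually (\<lambda>N. 0 \<le> u N) sequentially" by (simp add: u_def)
    show "eventually (\<lambda>N. u N \<le> sqrt 3 * ((c N)\<^sup>2 * sqrt (real N))) sequentially"
      using eventually_ge_at_top[of "1::nat"]
    proof eventually_elim
      case (elim N)
      have "sqrt (real N + 2) \<le> sqrt (3 * real N)" using elim by (intro real_sqrt_le_mono) auto
      also have "\<dots> = sqrt 3 * sqrt (real N)" by (simp add: real_sqrt_mult)
      finally have "(c N)\<^sup>2 * sqrt (real N + 2) \<le> (c N)\<^sup>2 * (sqrt 3 * sqrt (real N))"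
        by (intro mult_left_mono) auto
      then show ?case by (simp add: u_def algebra_simps)
    qed
    show "(\<lambda>_. 0::real) \<longlonglongrightarrow> 0" by simp
    have "(\<lambda>N. sqrt 3 * ((c N)\<^sup>2 * sqrt (real N))) \<longlonglongrightarrow> sqrt 3 * 0"
      by (intro tendsto_intros assms(6))
    then show "(\<lambda>N. sqrt 3 * ((c N)\<^sup>2 * sqrt (real N))) \<longlonglongrightarrow> 0" by simp
  qed
  have evu: "eventually (\<lambda>N. 4 * u N \<le> 1) sequentially"
  proof -
    have "eventually (\<lambda>N. u N < 1/4) sequentially" by (rule order_tendstoD(2)[OF u0]) simp
    then show ?thesis by eventually_elim simp
  qed
  show ?thesis
  proof (intro allI impI)
    fix \<epsilon> :: real assume \<epsilon>: "\<epsilon> > 0"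
    define p where "p N = Q.prob {\<eta> \<in> space Q. \<bar>partition_Z c h N \<eta> - 1\<bar> > \<epsilon>}" for N
    have bound: "p N \<le> 4 * u N / \<epsilon>\<^sup>2" if uN: "4 * u N \<le> 1" for N
    proof -
      define t where "t = (c N)\<^sup>2"
      have t0: "t \<ge> 0" by (simp add: t_def)
      have "p N = Q.prob {\<eta> \<in> space Q. \<bar>partition_Z c h' N \<eta> - 1\<bar> > \<epsilon>}"
        unfolding p_def
        apply (rule measure_eq_AE)
        subgoal using aeZ[of N] by eventually_elim auto
        by (intro sets_gt Zm)+
      also have "\<dots> \<le> Q.prob {\<eta> \<in> space Q. \<bar>partition_Z c h' N \<eta> - 1\<bar> \<ge> \<epsilon>}"
        apply (rule Q.finite_measure_mono)
         apply force
        by (intro sets_ge Zm)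
      also have "\<dots> \<le> Q.expectation (\<lambda>\<eta>. (partition_Z c h' N \<eta> - 1)\<^sup>2) / \<epsilon>\<^sup>2"
        by (rule Q.second_moment_method) (use rw.second_moment(1) \<epsilon> in auto)
      also have "\<dots> = ((\<Sum>w\<in>nn_walks N. \<Sum>v\<in>nn_walks N. Pw t N w v) / 4 ^ N - 1) / \<epsilon>\<^sup>2"
        unfolding rw.second_moment(2) t_def ..
      also have "(\<Sum>w\<in>nn_walks N. \<Sum>v\<in>nn_walks N. Pw t N w v) / 4 ^ N - 1 \<le> 4 * u N"
      proof -
        have cond: "t * (1 + (4 * t) * sqrt (real N + 2)) \<le> (4 * t) / 2"
        proof -
          have "(4 * t) * sqrt (real N + 2) \<le> 1" using uN by (simp add: u_def t_def)
          then have "t * (1 + (4 * t) * sqrt (real N + 2)) \<le> t * 2" using t0 by (intro mult_left_mono) auto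
          then show ?thesis by simp
        qed
        have "(\<Sum>w\<in>nn_walks N. \<Sum>v\<in>nn_walks N. Pw t N w v) \<le> 4 ^ N * (1 + (4 * t) * sqrt (real N + 2))"
          by (rule pair_bound[OF t0 _ cond]) (use t0 in simp)
        then show ?thesis by (simp add: u_def t_def field_simps)
      qed
      then have "((\<Sum>w\<in>nn_walks N. \<Sum>v\<in>nn_walks N. Pw t N w v) / 4 ^ N - 1) / \<epsilon>\<^sup>2 \<le> 4 * u N / \<epsilon>\<^sup>2"
        using \<epsilon> by (intro divide_right_mono) auto
      finally show ?thesis .
    qed
    show "p \<longlonglongrightarrow> 0"
    proof (rule tendsto_sandwich[of "\<lambda>_. 0" _ _ "\<lambda>N. 4 * u N / \<epsilon>\<^sup>2"])
      show "eventually (\<lambda>N. 0 \<le> p N) sequentially" by (simp add: p_def)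
      show "eventually (\<lambda>N. p N \<le> 4 * u N / \<epsilon>\<^sup>2) sequentially"
        using evu by eventually_elim (rule bound)
      show "(\<lambda>_. 0::real) \<longlonglongrightarrow> 0" by simp
      have "(\<lambda>N. 4 * u N / \<epsilon>\<^sup>2) \<longlonglongrightarrow> 4 * 0 / \<epsilon>\<^sup>2"
        by (intro tendsto_intros u0) (use \<epsilon> in simp)
      then show "(\<lambda>N. 4 * u N / \<epsilon>\<^sup>2) \<longlonglongrightarrow> 0" by simp
    qed
  qed
qed

end
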